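(* Let $\varphi$ be any forecasting system (not necessarily computable or non-degenerate) and $\omega\in\Omega$. If $\omega$ is Martin-Löf test random for $\varphi$, then $\omega$ is Martin-Löf random for $\varphi$.
   Context: Notation: $\mathbb N_0=\{0,1,\dots\}$; $\Omega=\{0,1\}^{\mathbb N}$; $\mathbb S$ finite binary strings, $\square$ empty string, $\omega^n$ first $n$ entries of $\omega$; $[s]=\{\omega:\omega^{|s|}=s\}$, $[A]=\bigcup_{s\in A}[s]$; for $A\subseteq\mathbb N_0\times\mathbb S$, $A_n=\{s:(n,s)\in A\}$. $\mathcal I$: nonempty closed subintervals of $[0,1]$; $\overline E_I(f)=\max_{p\in I}[pf(1)+(1-p)f(0)]$. Forecasting system: any map $\varphi:\mathbb S\to\mathcal I$. Supermartingale for $\varphi$: $M:\mathbb S\to\mathbb R$ with $\overline E_{\varphi(s)}(M(s\,\cdot))\le M(s)$ for all $s$; test supermartingale: non-negative with $M(\square)=1$. $\overline P_\varphi(G)=\inf\{M(\square):M\text{ supermartingale for }\varphi,\ \liminf_nM(\omega^n)\ge\mathbb 1_G(\omega)\ \forall\omega\}$. A real map $r:\mathbb S\to\mathbb R$ is lower semicomputable if there is a recursive $q:\mathbb S\times\mathbb N_0\to\mathbb Q$, non-decreasing in the second argument, with $q(s,n)\to r(s)$. $\omega$ is Martin-Löf random for $\varphi$ if every lower semicomputable test supermartingale $T$ for $\varphi$ satisfies $\sup_nT(\omega^n)<\infty$. A Martin-Löf test for $\varphi$ is a recursively enumerable $A\subseteq\mathbb N_0\times\mathbb S$ with $\overline P_\varphi([A_n])\le2^{-n}$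 for all $n$; $\omega$ is Martin-Löf test random for $\varphi$ if $\omega\notin\bigcap_n[A_n]$ for every Martin-Löf test $A$ for $\varphi$. *)

theory Defs
  imports "HOL-Analysis.Analysis" "HOL-Library.Nat_Bijection"
begin

text \<open>recfn n f: f is a total recursive function of arity n (only its values on
argument lists of length n are meaningful).\<close>

inductive recfn :: "nat \<Rightarrow> (nat list \<Rightarrow> nat) \<Rightarrow> bool" where
  zero: "recfn n (\<lambda>_. 0)"
| succ: "recfn 1 (\<lambda>xs. Suc (hd xs))"
| proj: "i < n \<Longrightarrow> recfn n (\<lambda>xs. xs ! i)"
| comp: "recfn m f \<Longrightarrow> length gs = m \<Longrightarrow> (\<forall>g\<in>set gs. recfn n g)
         \<Longrightarrow> recfn n (\<lambda>xs. f (map (\<lambda>g. g xs) gs))"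
| prim: "recfn n f \<Longrightarrow> recfn (n + 2) g
         \<Longrightarrow> recfn (Suc n) (\<lambda>xs. rec_nat (f (tl xs)) (\<lambda>k r. g (k # r # tl xs)) (hd xs))"
| mu: "recfn (Suc n) f \<Longrightarrow> (\<forall>xs. length xs = n \<longrightarrow> (\<exists>y. f (y # xs) = 0))
         \<Longrightarrow> recfn n (\<lambda>xs. LEAST y. f (y # xs) = 0)"

text \<open>Finite binary strings are bool lists (True = 1); Omega = nat \<Rightarrow> bool.\<close>

primrec str_enc :: "bool list \<Rightarrow> nat" where
  "str_enc [] = 0"
| "str_enc (b # s) = 2 * str_enc s + (if b then 2 else 1)"

definition rat_dec :: "nat \<Rightarrow> rat" where
  "rat_dec k = (case prod_decode k of (a, b) \<Rightarrow> of_int (int_decode a) / of_nat (Suc b))"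

definition prefix_of :: "(nat \<Rightarrow> bool) \<Rightarrow> nat \<Rightarrow> bool list" where
  "prefix_of \<omega> n = map \<omega> [0..<n]"

definition cyl :: "bool list set \<Rightarrow> (nat \<Rightarrow> bool) set" where
  "cyl A = {\<omega>. \<exists>s\<in>A. prefix_of \<omega> (length s) = s}"

definition section_of :: "(nat \<times> bool list) set \<Rightarrow> nat \<Rightarrow> bool list set" where
  "section_of A n = {s. (n, s) \<in> A}"

definition recursive_rat_map :: "(bool list \<Rightarrow> nat \<Rightarrow> rat) \<Rightarrow> bool" where
  "recursive_rat_map q \<longleftrightarrow>
     (\<exists>f. recfn 2 f \<and> (\<forall>s n. q s n = rat_dec (f [str_enc s, n])))"

definition lower_semicomputable :: "(bool list \<Rightarrow> real) \<Rightarrow> bool" where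
  "lower_semicomputable r \<longleftrightarrow>
     (\<exists>q. recursive_rat_map q \<and> (\<forall>s. mono (q s)) \<and>
          (\<forall>s. (\<lambda>n. real_of_rat (q s n)) \<longlonglongrightarrow> r s))"

definition rec_enum :: "(nat \<times> bool list) set \<Rightarrow> bool" where
  "rec_enum A \<longleftrightarrow>
     (\<exists>f. recfn 2 f \<and>
          (\<forall>n s. (n, s) \<in> A \<longleftrightarrow> (\<exists>t. f [prod_encode (n, str_enc s), t] = 0)))"

definition intervals :: "real set set" where
  "intervals = {{a..b} | a b. 0 \<le> a \<and> a \<le> b \<and> b \<le> 1}"

definition forecasting_system :: "(bool list \<Rightarrow> real set) \<Rightarrow> bool" where
  "forecasting_system \<phi> \<longleftrightarrow> (\<forall>s. \<phi> s \<in> intervals)"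

definition upper_exp :: "real set \<Rightarrow> (bool \<Rightarrow> real) \<Rightarrow> real" where
  "upper_exp I f = Sup ((\<lambda>p. p * f True + (1 - p) * f False) ` I)"

definition supermartingale :: "(bool list \<Rightarrow> real set) \<Rightarrow> (bool list \<Rightarrow> real) \<Rightarrow> bool" where
  "supermartingale \<phi> M \<longleftrightarrow> (\<forall>s. upper_exp (\<phi> s) (\<lambda>x. M (s @ [x])) \<le> M s)"

definition test_supermartingale :: "(bool list \<Rightarrow> real set) \<Rightarrow> (bool list \<Rightarrow> real) \<Rightarrow> bool" where
  "test_supermartingale \<phi> M \<longleftrightarrow> supermartingale \<phi> M \<and> (\<forall>s. 0 \<le> M s) \<and> M [] = 1"

definition upper_prob :: "(bool list \<Rightarrow> real set) \<Rightarrow> (nat \<Rightarrow> bool) set \<Rightarrow> ereal" where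
  "upper_prob \<phi> G = Inf {ereal (M []) | M. supermartingale \<phi> M \<and>
      (\<forall>\<omega>. liminf (\<lambda>n. ereal (M (prefix_of \<omega> n))) \<ge> ereal (indicator G \<omega>))}"

definition mlof_random :: "(bool list \<Rightarrow> real set) \<Rightarrow> (nat \<Rightarrow> bool) \<Rightarrow> bool" where
  "mlof_random \<phi> \<omega> \<longleftrightarrow>
     (\<forall>T. test_supermartingale \<phi> T \<and> lower_semicomputable T
          \<longrightarrow> bdd_above (range (\<lambda>n. T (prefix_of \<omega> n))))"

definition mlof_test :: "(bool list \<Rightarrow> real set) \<Rightarrow> (nat \<times> bool list) set \<Rightarrow> bool" where
  "mlof_test \<phi> A \<longleftrightarrow> rec_enum A \<and>
     (\<forall>n. upper_prob \<phi> (cyl (section_of A n)) \<le> ereal ((1/2) ^ n))"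

definition mlof_test_random :: "(bool list \<Rightarrow> real set) \<Rightarrow> (nat \<Rightarrow> bool) \<Rightarrow> bool" where
  "mlof_test_random \<phi> \<omega> \<longleftrightarrow>
     (\<forall>A. mlof_test \<phi> A \<longrightarrow> \<omega> \<notin> (\<Inter>n. cyl (section_of A n)))"

end

theory Submission
  imports Defs
begin


definition cf :: "nat \<Rightarrow> (nat list \<Rightarrow> nat) \<Rightarrow> bool" where
  "cf n F \<longleftrightarrow> (\<exists>f. recfn n f \<and> (\<forall>xs. length xs = n \<longrightarrow> f xs = F xs))"

lemma cf_cong: "cf n F \<Longrightarrow> (\<And>xs. length xs = n \<Longrightarrow> F xs = G xs) \<Longrightarrow> cf n G"
  unfolding cf_def by metis

lemma cf_zero: "cf n (\<lambda>_. 0)"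
  unfolding cf_def using recfn.zero by blast

lemma cf_proj: "i < n \<Longrightarrow> cf n (\<lambda>xs. xs ! i)"
  unfolding cf_def using recfn.proj by blast

lemma cf_succ: assumes "cf n G" shows "cf n (\<lambda>xs. Suc (G xs))"
proof -
  obtain g where g: "recfn n g" "\<forall>xs. length xs = n \<longrightarrow> g xs = G xs" using assms cf_def by auto
  have "recfn n (\<lambda>xs. (\<lambda>xs. Suc (hd xs)) (map (\<lambda>g. g xs) [g]))"
    by (rule recfn.comp[OF recfn.succ]) (use g in auto)
  then show ?thesis unfolding cf_def using g by (intro exI[of _ "(\<lambda>xs. (\<lambda>xs. Suc (hd xs)) (map (\<lambda>g. g xs) [g]))"]) auto
qed

lemma cf_comp1: assumes "cf 1 F" "cf n G" shows "cf n (\<lambda>xs. F [G xs])"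
proof -
  obtain f where f: "recfn 1 f" "\<forall>xs. length xs = 1 \<longrightarrow> f xs = F xs" using assms cf_def by auto
  obtain g where g: "recfn n g" "\<forall>xs. length xs = n \<longrightarrow> g xs = G xs" using assms cf_def by auto
  have "recfn n (\<lambda>xs. f (map (\<lambda>g. g xs) [g]))"
    by (rule recfn.comp[OF f(1)]) (use g in auto)
  then show ?thesis unfolding cf_def using g f by (intro exI[of _ "(\<lambda>xs. f (map (\<lambda>g. g xs) [g]))"]) auto
qed

lemma cf_comp2: assumes "cf 2 F" "cf n G" "cf n H" shows "cf n (\<lambda>xs. F [G xs, H xs])"
proof -
  obtain f where f: "recfn 2 f" "\<forall>xs. length xs = 2 \<longrightarrow> f xs = F xs" using assms cf_def by auto
  obtain g where g: "recfn n g" "\<forall>xs. length xs = n \<longrightarrow> g xs = G xs" using assms cf_def by auto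
  obtain h where h: "recfn n h" "\<forall>xs. length xs = n \<longrightarrow> h xs = H xs" using assms cf_def by auto
  have "recfn n (\<lambda>xs. f (map (\<lambda>g. g xs) [g, h]))"
    by (rule recfn.comp[OF f(1)]) (use g h in auto)
  then show ?thesis unfolding cf_def using g f h by (intro exI[of _ "(\<lambda>xs. f (map (\<lambda>g. g xs) [g, h]))"]) auto
qed

lemma cf_prim0: assumes "cf 0 F" "cf 2 G"
  shows "cf 1 (\<lambda>xs. rec_nat (F []) (\<lambda>k r. G [k, r]) (xs ! 0))"
proof -
  obtain f where f: "recfn 0 f" "\<forall>xs. length xs = 0 \<longrightarrow> f xs = F xs" using assms cf_def by auto
  obtain g where g: "recfn 2 g" "\<forall>xs. length xs = 2 \<longrightarrow> g xs = G xs" using assms cf_def by auto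
  have g2: "recfn (0 + 2) g" using g(1) by (simp add: numeral_2_eq_2)
  have r: "recfn (Suc 0) (\<lambda>xs. rec_nat (f (tl xs)) (\<lambda>k r. g (k # r # tl xs)) (hd xs))"
    by (rule recfn.prim[OF f(1) g2])
  show ?thesis unfolding cf_def
  proof (intro exI conjI allI impI)
    show "recfn 1 (\<lambda>xs. rec_nat (f (tl xs)) (\<lambda>k r. g (k # r # tl xs)) (hd xs))" using r unfolding One_nat_def .
    fix xs :: "nat list" assume "length xs = 1"
    then obtain y where xs: "xs = [y]" by (cases xs) auto
    have e: "(\<lambda>k r. g [k, r]) = (\<lambda>k r. G [k, r])" using g(2) by (auto intro!: ext)
    show "rec_nat (f (tl xs)) (\<lambda>k r. g (k # r # tl xs)) (hd xs) = rec_nat (F []) (\<lambda>k r. G [k, r]) (xs ! 0)"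
      using f(2) e xs by simp
  qed
qed

lemma cf_prim1: assumes "cf 1 F" "cf 3 G"
  shows "cf 2 (\<lambda>xs. rec_nat (F [xs ! 1]) (\<lambda>k r. G [k, r, xs ! 1]) (xs ! 0))"
proof -
  obtain f where f: "recfn 1 f" "\<forall>xs. length xs = 1 \<longrightarrow> f xs = F xs" using assms cf_def by auto
  obtain g where g: "recfn 3 g" "\<forall>xs. length xs = 3 \<longrightarrow> g xs = G xs" using assms cf_def by auto
  have g3: "recfn (1 + 2) g" using g(1) by (simp add: numeral_3_eq_3)
  have r: "recfn (Suc 1) (\<lambda>xs. rec_nat (f (tl xs)) (\<lambda>k r. g (k # r # tl xs)) (hd xs))"
    by (rule recfn.prim[OF f(1) g3])
  show ?thesis unfolding cf_def
  proof (intro exI conjI allI impI)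
    show "recfn 2 (\<lambda>xs. rec_nat (f (tl xs)) (\<lambda>k r. g (k # r # tl xs)) (hd xs))" using r unfolding Suc_1 .
    fix xs :: "nat list" assume "length xs = 2"
    then obtain y x where xs: "xs = [y, x]" by (cases xs; cases "tl xs") auto
    have e: "(\<lambda>k r. g [k, r, x]) = (\<lambda>k r. G [k, r, x])" using g(2) by (auto intro!: ext)
    show "rec_nat (f (tl xs)) (\<lambda>k r. g (k # r # tl xs)) (hd xs) = rec_nat (F [xs ! 1]) (\<lambda>k r. G [k, r, xs ! 1]) (xs ! 0)"
      using f(2) e xs by simp
  qed
qed

lemma cf_mu: assumes "cf 2 F" "\<And>x. \<exists>y. F [y, x] = 0"
  shows "cf 1 (\<lambda>xs. LEAST y. F [y, xs ! 0] = 0)"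
proof -
  obtain f where f: "recfn 2 f" "\<forall>xs. length xs = 2 \<longrightarrow> f xs = F xs" using assms cf_def by auto
  have ex: "\<forall>xs. length xs = 1 \<longrightarrow> (\<exists>y. f (y # xs) = 0)"
  proof (intro allI impI)
    fix xs :: "nat list" assume "length xs = 1"
    then obtain x where xs: "xs = [x]" by (cases xs) auto
    show "\<exists>y. f (y # xs) = 0" using assms(2)[of x] f(2) xs by auto
  qed
  have f2: "recfn (Suc 1) f" using f(1) by (simp add: numeral_2_eq_2)
  have r: "recfn 1 (\<lambda>xs. LEAST y. f (y # xs) = 0)"
    by (rule recfn.mu[OF f2 ex])
  show ?thesis unfolding cf_def
  proof (intro exI conjI allI impI)
    show "recfn 1 (\<lambda>xs. LEAST y. f (y # xs) = 0)" by (rule r)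
    fix xs :: "nat list" assume "length xs = 1"
    then obtain x where xs: "xs = [x]" by (cases xs) auto
    show "(LEAST y. f (y # xs) = 0) = (LEAST y. F [y, xs ! 0] = 0)" using f(2) xs by simp
  qed
qed

lemma cf_un: "cf 1 (\<lambda>xs. h (xs ! 0)) \<Longrightarrow> cf n F \<Longrightarrow> cf n (\<lambda>xs. h (F xs))"
  using cf_comp1[of "\<lambda>xs. h (xs ! 0)" n F] by simp

lemma cf_add2: "cf 2 (\<lambda>xs. xs ! 0 + xs ! 1)"
proof -
  have c: "cf 2 (\<lambda>xs. rec_nat ((\<lambda>xs. xs ! 0) [xs ! 1]) (\<lambda>k r. (\<lambda>xs. Suc (xs ! 1)) [k, r, xs ! 1]) (xs ! 0))"
    by (rule cf_prim1[where F="\<lambda>xs. xs ! 0" and G="\<lambda>xs. Suc (xs ! 1)"] ; intro cf_proj cf_succ; simp)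
  have e: "rec_nat a (\<lambda>k r. Suc r) y = y + a" for a y :: nat by (induction y) auto
  show ?thesis using c by (rule cf_cong) (simp add: e)
qed

lemma cf_add: "cf n F \<Longrightarrow> cf n G \<Longrightarrow> cf n (\<lambda>xs. F xs + G xs)"
  using cf_comp2[OF cf_add2, of n F G] by simp

lemma cf_mult2: "cf 2 (\<lambda>xs. xs ! 0 * xs ! 1)"
proof -
  have c: "cf 2 (\<lambda>xs. rec_nat ((\<lambda>xs. 0) [xs ! 1]) (\<lambda>k r. (\<lambda>xs. xs ! 1 + xs ! 2) [k, r, xs ! 1]) (xs ! 0))"
    by (rule cf_prim1[where F="\<lambda>xs. 0" and G="\<lambda>xs. xs ! 1 + xs ! 2"] ; intro cf_proj cf_add cf_zero; simp)
  have e: "rec_nat 0 (\<lambda>k r. r + a) y = y * a" for a y :: nat by (induction y) auto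
  show ?thesis using c by (rule cf_cong) (simp add: e)
qed

lemma cf_mult: "cf n F \<Longrightarrow> cf n G \<Longrightarrow> cf n (\<lambda>xs. F xs * G xs)"
  using cf_comp2[OF cf_mult2, of n F G] by simp

lemma cf_pred: "cf 1 (\<lambda>xs. xs ! 0 - 1)"
proof -
  have c: "cf 1 (\<lambda>xs. rec_nat ((\<lambda>xs. 0) []) (\<lambda>k r. (\<lambda>xs. xs ! 0) [k, r]) (xs ! 0))"
    by (rule cf_prim0[where F="\<lambda>xs. 0" and G="\<lambda>xs. xs ! 0"] ; intro cf_proj cf_zero; simp)
  have e: "rec_nat 0 (\<lambda>k r. k) y = y - 1" for y :: nat by (induction y) auto
  show ?thesis using c by (rule cf_cong) (simp add: e)
qed

lemma cf_sub2: "cf 2 (\<lambda>xs. xs ! 1 - xs ! 0)"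
proof -
  have p: "cf 3 (\<lambda>xs. xs ! 1 - 1)"
    using cf_un[where h="\<lambda>x. x - 1", OF cf_pred cf_proj[of 1 3]] by simp
  have c: "cf 2 (\<lambda>xs. rec_nat ((\<lambda>xs. xs ! 0) [xs ! 1]) (\<lambda>k r. (\<lambda>xs. xs ! 1 - 1) [k, r, xs ! 1]) (xs ! 0))"
    by (rule cf_prim1[where F="\<lambda>xs. xs ! 0" and G="\<lambda>xs. xs ! 1 - 1"] ; intro cf_proj p; simp)
  have e: "rec_nat a (\<lambda>k r. [k, r, b] ! 1 - 1) y = a - y" for a b y :: nat by (induction y) auto
  show ?thesis using c by (rule cf_cong) (simp only: e, simp)
qed

lemma cf_sub: "cf n F \<Longrightarrow> cf n G \<Longrightarrow> cf n (\<lambda>xs. F xs - G xs)"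
  using cf_comp2[OF cf_sub2, of n G F] by simp

lemma cf_const: "cf n (\<lambda>_. c)"
  by (induction c) (auto intro: cf_zero cf_succ)

lemma cf_tri: "cf 1 (\<lambda>xs. triangle (xs ! 0))"
proof -
  have c: "cf 1 (\<lambda>xs. rec_nat ((\<lambda>xs. 0) []) (\<lambda>k r. (\<lambda>xs. xs ! 1 + Suc (xs ! 0)) [k, r]) (xs ! 0))"
    by (rule cf_prim0[where F="\<lambda>xs. 0" and G="\<lambda>xs. xs ! 1 + Suc (xs ! 0)"] ; intro cf_proj cf_zero cf_add cf_succ; simp)
  have e: "rec_nat 0 (\<lambda>k r. [k, r] ! 1 + Suc ([k, r] ! 0)) y = triangle y" for y :: nat by (induction y) auto
  show ?thesis using c by (rule cf_cong) (rule e)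
qed

lemma cf_pow2: "cf 1 (\<lambda>xs. 2 ^ (xs ! 0))"
proof -
  have c: "cf 1 (\<lambda>xs. rec_nat ((\<lambda>xs. 1) []) (\<lambda>k r. (\<lambda>xs. xs ! 1 + xs ! 1) [k, r]) (xs ! 0))"
    by (rule cf_prim0[where F="\<lambda>xs. 1" and G="\<lambda>xs. xs ! 1 + xs ! 1"] ; intro cf_proj cf_const cf_add; simp)
  have e: "rec_nat 1 (\<lambda>k r. [k, r] ! 1 + [k, r] ! 1) y = (2::nat) ^ y" for y :: nat by (induction y) auto
  show ?thesis using c by (rule cf_cong) (rule e)
qed

lemma cf_par: "cf 1 (\<lambda>xs. (xs ! 0) mod 2)"
proof -
  have c: "cf 1 (\<lambda>xs. rec_nat ((\<lambda>xs. 0) []) (\<lambda>k r. (\<lambda>xs. 1 - xs ! 1) [k, r]) (xs ! 0))"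
    by (rule cf_prim0[where F="\<lambda>xs. 0" and G="\<lambda>xs. 1 - xs ! 1"] ; intro cf_proj cf_const cf_sub; simp)
  have e: "rec_nat 0 (\<lambda>k r. 1 - [k, r] ! 1) y = y mod 2" for y :: nat by (induction y) (auto simp: mod_Suc)
  show ?thesis using c by (rule cf_cong) (rule e)
qed

definition dsum :: "nat \<Rightarrow> nat" where "dsum x = (LEAST s. Suc x - triangle (Suc s) = 0)"

lemma tri_mono: "a \<le> b \<Longrightarrow> triangle a \<le> triangle b"
  unfolding triangle_def by (intro div_le_mono mult_le_mono) auto

lemma dsum_eq: "dsum (prod_encode (a, b)) = a + b"
  unfolding dsum_def prod_encode_def
proof (rule Least_equality)
  show "Suc ((\<lambda>(m, n). triangle (m + n) + m) (a, b)) - triangle (Suc (a + b)) = 0" by simp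
  fix y assume h: "Suc ((\<lambda>(m, n). triangle (m + n) + m) (a, b)) - triangle (Suc y) = 0"
  show "a + b \<le> y"
  proof (rule ccontr)
    assume "\<not> a + b \<le> y"
    then have "triangle (Suc y) \<le> triangle (a + b)" by (intro tri_mono) simp
    with h show False by simp
  qed
qed

lemma cf_dsum: "cf 1 (\<lambda>xs. dsum (xs ! 0))"
proof -
  have c: "cf 2 (\<lambda>xs. Suc (xs ! 1) - triangle (Suc (xs ! 0)))"
    by (rule cf_sub[OF cf_succ[OF cf_proj] cf_un[where h=triangle, OF cf_tri cf_succ[OF cf_proj]]]) simp_all
  have ex: "\<exists>y. Suc ([y, x] ! 1) - triangle (Suc ([y, x] ! 0)) = 0" for x
  proof -
    have "Suc x \<le> triangle (Suc x)" by (induction x) auto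
    then show ?thesis by (intro exI[of _ x]) simp
  qed
  show ?thesis using cf_mu[OF c ex] unfolding dsum_def by simp
qed

lemma pd_both: "fst (prod_decode x) = x - triangle (dsum x) \<and> snd (prod_decode x) = dsum x - fst (prod_decode x)"
proof -
  obtain a b where ab: "prod_decode x = (a, b)" by (cases "prod_decode x")
  have x: "x = prod_encode (a, b)" using prod_decode_inverse[of x] ab by simp
  have d: "dsum x = a + b" using x dsum_eq by simp
  show ?thesis using ab d x by (simp add: prod_encode_def)
qed

lemma pd_fst: "fst (prod_decode x) = x - triangle (dsum x)"
  using pd_both by blast

lemma pd_snd: "snd (prod_decode x) = dsum x - fst (prod_decode x)"
  using pd_both by blast

lemma cf_fst: "cf 1 (\<lambda>xs. fst (prod_decode (xs ! 0)))"
  unfolding pd_fst by (intro cf_sub cf_proj cf_un[where h=triangle, OF cf_tri] cf_un[where h=dsum, OF cf_dsum]) simp_all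

lemma cf_snd: "cf 1 (\<lambda>xs. snd (prod_decode (xs ! 0)))"
  unfolding pd_snd by (intro cf_sub cf_proj cf_un[where h="\<lambda>x. fst (prod_decode x)", OF cf_fst] cf_un[where h=dsum, OF cf_dsum]) simp_all



lemma ue_le:
  assumes "I \<in> intervals"
  shows "upper_exp I f \<le> y \<longleftrightarrow> (\<forall>p\<in>I. p * f True + (1 - p) * f False \<le> y)"
proof -
  obtain a b where I: "I = {a..b}" "0 \<le> a" "a \<le> b" "b \<le> 1" using assms unfolding intervals_def by auto
  let ?S = "(\<lambda>p. p * f True + (1 - p) * f False) ` I"
  have ne: "?S \<noteq> {}" using I by auto
  have bd: "bdd_above ?S"
  proof (rule bdd_aboveI)
    fix x assume "x \<in> ?S"
    then obtain p where p: "p \<in> I" "x = p * f True + (1 - p) * f False" by auto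
    have p01: "0 \<le> p" "p \<le> 1" using p I by auto
    have "p * f True \<le> \<bar>f True\<bar>"
      using mult_left_mono[OF abs_ge_self p01(1), of "f True"] mult_left_le_one_le[OF abs_ge_zero p01, of "f True"] by linarith
    moreover have "(1 - p) * f False \<le> \<bar>f False\<bar>"
    proof -
      have "0 \<le> 1 - p" "1 - p \<le> 1" using p01 by auto
      then show ?thesis using mult_left_mono[OF abs_ge_self, of "1 - p" "f False"] mult_left_le_one_le[OF abs_ge_zero, of "1 - p" "f False"] by linarith
    qed
    ultimately show "x \<le> \<bar>f True\<bar> + \<bar>f False\<bar>" using p by linarith
  qed
  show ?thesis unfolding upper_exp_def using cSup_le_iff[OF ne bd] by simp
qed

definition stopM :: "(bool list \<Rightarrow> real) \<Rightarrow> real \<Rightarrow> bool list \<Rightarrow> real" where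
  "stopM T c s = (if \<exists>j\<le>length s. c < T (take j s)
     then T (take (LEAST j. c < T (take j s)) s) else T s) / c"

lemma stop_snoc1:
  assumes "\<exists>j\<le>length s. c < T (take j s)"
  shows "stopM T c (s @ [x]) = stopM T c s"
proof -
  let ?L = "LEAST j. c < T (take j s)"
  obtain j where j: "j \<le> length s" "c < T (take j s)" using assms by auto
  have L: "c < T (take ?L s)" using LeastI[of "\<lambda>j. c < T (take j s)", OF j(2)] .
  have Lj: "?L \<le> j" using Least_le[of "\<lambda>j. c < T (take j s)", OF j(2)] .
  have Ls: "?L \<le> length s" using Lj j by simp
  have eq: "(LEAST j. c < T (take j (s @ [x]))) = ?L"
  proof (rule Least_equality)
    show "c < T (take ?L (s @ [x]))" using L Ls by simp
    fix y assume y: "c < T (take y (s @ [x]))"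
    show "?L \<le> y"
    proof (rule ccontr)
      assume "\<not> ?L \<le> y"
      then have "y < ?L" by simp
      then have "take y (s @ [x]) = take y s" using Ls by simp
      then have "c < T (take y s)" using y by simp
      then have "?L \<le> y" by (rule Least_le)
      with \<open>y < ?L\<close> show False by simp
    qed
  qed
  have ex2: "\<exists>j\<le>length (s @ [x]). c < T (take j (s @ [x]))"
    using j by (intro exI[of _ j]) simp
  show ?thesis unfolding stopM_def using assms ex2 eq Ls by simp
qed

lemma stop_snoc2:
  assumes "\<not> (\<exists>j\<le>length s. c < T (take j s))"
  shows "stopM T c (s @ [x]) = T (s @ [x]) / c" "stopM T c s = T s / c"
proof -
  show "stopM T c s = T s / c" by (simp only: stopM_def if_not_P[OF assms])
  show "stopM T c (s @ [x]) = T (s @ [x]) / c"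
  proof (cases "\<exists>j\<le>length (s @ [x]). c < T (take j (s @ [x]))")
    case True
    have nl: "\<not> c < T (take y (s @ [x]))" if "y \<le> length s" for y
      using assms that by auto
    have full: "c < T (s @ [x])"
      using True nl by (metis le_Suc_eq length_append_singleton take_all_iff)
    have eq: "(LEAST j. c < T (take j (s @ [x]))) = Suc (length s)"
    proof (rule Least_equality)
      show "c < T (take (Suc (length s)) (s @ [x]))" using full by simp
      fix y assume "c < T (take y (s @ [x]))"
      then show "Suc (length s) \<le> y" using nl[of y] by (cases "y \<le> length s") auto
    qed
    show ?thesis unfolding stopM_def using True eq by simp
  next
    case False
    then show ?thesis by (simp only: stopM_def if_not_P[OF False] if_False)
  qed
qed

lemma stop_super:
  assumes fs: "forecasting_system \<phi>" and T: "supermartingale \<phi> T" and c: "0 < c"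
  shows "supermartingale \<phi> (stopM T c)"
  unfolding supermartingale_def
proof
  fix s
  have I: "\<phi> s \<in> intervals" using fs forecasting_system_def by auto
  show "upper_exp (\<phi> s) (\<lambda>x. stopM T c (s @ [x])) \<le> stopM T c s"
    unfolding ue_le[OF I]
  proof
    fix p assume p: "p \<in> \<phi> s"
    show "p * stopM T c (s @ [True]) + (1 - p) * stopM T c (s @ [False]) \<le> stopM T c s"
    proof (cases "\<exists>j\<le>length s. c < T (take j s)")
      case True
      then show ?thesis using stop_snoc1[OF True] by (simp add: algebra_simps)
    next
      case False
      have "p * T (s @ [True]) + (1 - p) * T (s @ [False]) \<le> T s"
      proof -
        have "upper_exp (\<phi> s) (\<lambda>x. T (s @ [x])) \<le> T s" using T supermartingale_def by blast
        then have "\<forall>p\<in>\<phi> s. p * T (s @ [True]) + (1 - p) * T (s @ [False]) \<le> T s"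
          using ue_le[OF I, of "\<lambda>x. T (s @ [x])" "T s"] by simp
        then show ?thesis using p by blast
      qed
      then have "(p * T (s @ [True]) + (1 - p) * T (s @ [False])) / c \<le> T s / c"
        using c by (simp add: divide_right_mono)
      then show ?thesis using stop_snoc2[OF False] by (simp add: add_divide_distrib)
    qed
  qed
qed

lemma stop_nonneg: "(\<forall>s. 0 \<le> T s) \<Longrightarrow> 0 < c \<Longrightarrow> 0 \<le> stopM T c s"
  unfolding stopM_def by auto

lemma stop_nil: "stopM T c [] = T [] / c"
  unfolding stopM_def by simp

lemma take_prefix: "take j (prefix_of \<omega> m) = prefix_of \<omega> (min j m)"
  unfolding prefix_of_def by (simp add: take_map min_def)

lemma stop_big:
  assumes c: "0 < c" and s: "c < T s" "prefix_of \<omega> (length s) = s" and m: "length s \<le> m"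
  shows "1 < stopM T c (prefix_of \<omega> m)"
proof -
  let ?u = "prefix_of \<omega> m"
  have lu: "length ?u = m" unfolding prefix_of_def by simp
  have "take (length s) ?u = s" using take_prefix[of "length s" \<omega> m] m s(2) by simp
  then have ex: "\<exists>j\<le>length ?u. c < T (take j ?u)" using s(1) m lu by (intro exI[of _ "length s"]) simp
  have L: "c < T (take (LEAST j. c < T (take j ?u)) ?u)"
    using ex by (auto intro: LeastI)
  show ?thesis unfolding stopM_def using ex L c by simp
qed

lemma up_bound:
  assumes fs: "forecasting_system \<phi>" and T: "test_supermartingale \<phi> T" and c: "1 \<le> c"
    and S: "\<forall>s\<in>S. c < T s"
  shows "upper_prob \<phi> (cyl S) \<le> ereal (1 / c)"
proof -
  let ?M = "stopM T c"
  have c0: "0 < c" using c by simp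
  have sm: "supermartingale \<phi> ?M" using stop_super[OF fs _ c0] T test_supermartingale_def by blast
  have nn: "\<And>s. 0 \<le> ?M s" using stop_nonneg[OF _ c0] T test_supermartingale_def by blast
  have lim: "ereal (indicator (cyl S) \<omega>) \<le> liminf (\<lambda>n. ereal (?M (prefix_of \<omega> n)))" for \<omega>
  proof (cases "\<omega> \<in> cyl S")
    case True
    then obtain s where s: "s \<in> S" "prefix_of \<omega> (length s) = s" unfolding cyl_def by auto
    have "eventually (\<lambda>n. ereal 1 \<le> ereal (?M (prefix_of \<omega> n))) sequentially"
      unfolding eventually_sequentially
      using stop_big[OF c0 _ s(2)] S s(1) by (intro exI[of _ "length s"]) (auto intro: less_imp_le)
    then have "ereal 1 \<le> liminf (\<lambda>n. ereal (?M (prefix_of \<omega> n)))" by (rule Liminf_bounded)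
    then show ?thesis using True by simp
  next
    case False
    have "eventually (\<lambda>n. ereal 0 \<le> ereal (?M (prefix_of \<omega> n))) sequentially"
      using nn by simp
    then have "ereal 0 \<le> liminf (\<lambda>n. ereal (?M (prefix_of \<omega> n)))" by (rule Liminf_bounded)
    then show ?thesis using False by simp
  qed
  have "ereal (?M []) \<in> {ereal (M []) | M. supermartingale \<phi> M \<and>
      (\<forall>\<omega>. liminf (\<lambda>n. ereal (M (prefix_of \<omega> n))) \<ge> ereal (indicator (cyl S) \<omega>))}"
    using sm lim by blast
  then have "upper_prob \<phi> (cyl S) \<le> ereal (?M [])" unfolding upper_prob_def by (rule Inf_lower)
  also have "?M [] = 1 / c" using stop_nil T test_supermartingale_def by simp
  finally show ?thesis .
qed



lemma rat_gt:
  "(2::real) ^ n < real_of_rat (rat_dec v) \<longleftrightarrow>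
   (fst (prod_decode v) mod 2 = 0 \<and> 2 ^ Suc n * Suc (snd (prod_decode v)) < fst (prod_decode v))"
proof -
  obtain a b where ab: "prod_decode v = (a, b)" by (cases "prod_decode v")
  have r: "real_of_rat (rat_dec v) = real_of_int (int_decode a) / real (Suc b)"
    unfolding rat_dec_def ab by (simp add: of_rat_divide of_rat_add del: of_nat_Suc)
  show ?thesis
  proof (cases "even a")
    case True
    have id: "int_decode a = int (a div 2)" unfolding int_decode_def sum_decode_def using True by simp
    have "(2::real) ^ n < real (a div 2) / real (Suc b) \<longleftrightarrow> 2 ^ n * real (Suc b) < real (a div 2)"
      by (simp add: pos_less_divide_eq del: of_nat_Suc)
    also have "\<dots> \<longleftrightarrow> 2 ^ n * Suc b < a div 2"
      by (metis of_nat_less_iff of_nat_mult of_nat_numeral of_nat_power)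
    also have "\<dots> \<longleftrightarrow> 2 ^ Suc n * Suc b < a" using True by auto
    finally show ?thesis using True r id ab by simp
  next
    case False
    have id: "int_decode a < 0" unfolding int_decode_def sum_decode_def using False by simp
    have "real_of_int (int_decode a) / real (Suc b) < 0"
      using id by (simp add: divide_neg_pos del: of_nat_Suc)
    moreover have "(0::real) < 2 ^ n" by simp
    ultimately have "\<not> (2::real) ^ n < real_of_rat (rat_dec v)" using r by linarith
    moreover have "a mod 2 \<noteq> 0" using False by presburger
    ultimately show ?thesis using ab by simp
  qed
qed

definition Ff :: "(nat list \<Rightarrow> nat) \<Rightarrow> nat list \<Rightarrow> nat" where
  "Ff g xs = (let n = fst (prod_decode (xs ! 0)); e = snd (prod_decode (xs ! 0));
      v = g [e, xs ! 1]; a = fst (prod_decode v); b = snd (prod_decode v) in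
      a mod 2 + (1 - (a - 2 ^ Suc n * Suc b)))"

lemma cf_Ff: assumes "recfn 2 g" shows "cf 2 (Ff g)"
proof -
  have g: "cf 2 g" using assms cf_def by blast
  have v: "cf 2 (\<lambda>xs. g [snd (prod_decode (xs ! 0)), xs ! 1])"
    by (rule cf_comp2[OF g cf_un[where h="\<lambda>x. snd (prod_decode x)", OF cf_snd cf_proj] cf_proj]) simp_all
  have a: "cf 2 (\<lambda>xs. fst (prod_decode (g [snd (prod_decode (xs ! 0)), xs ! 1])))"
    by (rule cf_un[where h="\<lambda>x. fst (prod_decode x)", OF cf_fst v])
  have b: "cf 2 (\<lambda>xs. snd (prod_decode (g [snd (prod_decode (xs ! 0)), xs ! 1])))"
    by (rule cf_un[where h="\<lambda>x. snd (prod_decode x)", OF cf_snd v])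
  have n: "cf 2 (\<lambda>xs. fst (prod_decode (xs ! 0)))"
    by (rule cf_un[where h="\<lambda>x. fst (prod_decode x)", OF cf_fst cf_proj]) simp
  have p: "cf 2 (\<lambda>xs. 2 ^ Suc (fst (prod_decode (xs ! 0))))"
    by (rule cf_un[where h="\<lambda>x. 2 ^ x", OF cf_pow2 cf_succ[OF n]])
  have m: "cf 2 (\<lambda>xs. fst (prod_decode (g [snd (prod_decode (xs ! 0)), xs ! 1])) mod 2)"
    by (rule cf_un[where h="\<lambda>x. x mod 2", OF cf_par a])
  have "cf 2 (\<lambda>xs. fst (prod_decode (g [snd (prod_decode (xs ! 0)), xs ! 1])) mod 2 +
      (1 - (fst (prod_decode (g [snd (prod_decode (xs ! 0)), xs ! 1])) -
         2 ^ Suc (fst (prod_decode (xs ! 0))) * Suc (snd (prod_decode (g [snd (prod_decode (xs ! 0)), xs ! 1]))))))"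
    by (rule cf_add[OF m cf_sub[OF cf_const cf_sub[OF a cf_mult[OF p cf_succ[OF b]]]]])
  then show ?thesis unfolding Ff_def Let_def .
qed

lemma Ff_zero: "Ff g [prod_encode (n, e), t] = 0 \<longleftrightarrow> (2::real) ^ n < real_of_rat (rat_dec (g [e, t]))"
  unfolding rat_gt Ff_def Let_def by auto

theorem proposition6p1:
  fixes \<phi> :: "bool list \<Rightarrow> real set" and \<omega> :: "nat \<Rightarrow> bool"
  assumes "forecasting_system \<phi>"
    and "mlof_test_random \<phi> \<omega>"
  shows "mlof_random \<phi> \<omega>"
  unfolding mlof_random_def
proof (intro allI impI)
  fix T assume TT: "test_supermartingale \<phi> T \<and> lower_semicomputable T"
  then have T: "test_supermartingale \<phi> T" and lsc: "lower_semicomputable T" by auto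
  obtain q where q: "recursive_rat_map q" "\<And>s. mono (q s)" "\<And>s. (\<lambda>n. real_of_rat (q s n)) \<longlonglongrightarrow> T s"
    using lsc unfolding lower_semicomputable_def by blast
  obtain g where g: "recfn 2 g" "\<And>s n. q s n = rat_dec (g [str_enc s, n])"
    using q(1) unfolding recursive_rat_map_def by blast
  have qle: "real_of_rat (q s k) \<le> T s" for s k
  proof -
    have "incseq (\<lambda>n. real_of_rat (q s n))"
      using q(2)[of s] unfolding mono_def incseq_def by (simp add: of_rat_less_eq)
    then show ?thesis using incseq_le q(3) by blast
  qed
  define A where "A = {(n, s). \<exists>k. (2::real) ^ n < real_of_rat (q s k)}"
  have re: "rec_enum A"
  proof -
    obtain f where f: "recfn 2 f" "\<forall>xs. length xs = 2 \<longrightarrow> f xs = Ff g xs"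
      using cf_Ff[OF g(1)] unfolding cf_def by blast
    show ?thesis unfolding rec_enum_def
    proof (intro exI conjI allI)
      show "recfn 2 f" by (rule f(1))
      fix n s
      show "(n, s) \<in> A \<longleftrightarrow> (\<exists>t. f [prod_encode (n, str_enc s), t] = 0)"
        unfolding A_def using f(2) Ff_zero g(2) by simp
    qed
  qed
  have test: "mlof_test \<phi> A"
    unfolding mlof_test_def
  proof (intro conjI allI re)
    fix n
    have S: "\<forall>s\<in>section_of A n. (2::real) ^ n < T s"
      unfolding section_of_def A_def using qle by (auto intro: less_le_trans)
    have "upper_prob \<phi> (cyl (section_of A n)) \<le> ereal (1 / 2 ^ n)"
      by (rule up_bound[OF assms(1) T _ S]) simp
    then show "upper_prob \<phi> (cyl (section_of A n)) \<le> ereal ((1 / 2) ^ n)"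
      by (simp add: power_one_over)
  qed
  show "bdd_above (range (\<lambda>n. T (prefix_of \<omega> n)))"
  proof (rule ccontr)
    assume nb: "\<not> bdd_above (range (\<lambda>n. T (prefix_of \<omega> n)))"
    have "\<omega> \<in> cyl (section_of A n)" for n
    proof -
      obtain m where m: "(2::real) ^ n < T (prefix_of \<omega> m)"
        using nb unfolding bdd_above_def by (auto simp: not_le)
      have "eventually (\<lambda>k. (2::real) ^ n < real_of_rat (q (prefix_of \<omega> m) k)) sequentially"
        using q(3) m by (rule order_tendstoD)
      then obtain k where "(2::real) ^ n < real_of_rat (q (prefix_of \<omega> m) k)"
        using eventually_sequentially by auto
      then have "prefix_of \<omega> m \<in> section_of A n" unfolding section_of_def A_def by auto
      moreover have "length (prefix_of \<omega> m) = m" unfolding prefix_of_def by simp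
      ultimately show ?thesis unfolding cyl_def by (intro CollectI bexI[of _ "prefix_of \<omega> m"]) simp_all
    qed
    then have "\<omega> \<in> (\<Inter>n. cyl (section_of A n))" by auto
    with test assms(2) show False unfolding mlof_test_random_def by blast
  qed
qed

end
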